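(* If $k$ is odd, then $f(n,k)\ge\left(1-\frac{4}{(k+1)^2}+o(1)\right)\binom{n}{3}$, where $o(1)\to0$ as $n\to\infty$ with $k$ fixed.
   Context: Let $K^{(2)}_n$ be the complete graph on $[n]$ with the natural order. A $k$-edge-labeling $\phi$ of $K^{(2)}_n$ assigns to each pair $uv$ a label from a fixed linearly ordered set of size $k$. A triple $u<v<w$ is good if $\phi(uv)<\phi(vw)$, and bad otherwise. $f(n,k)$ is the maximum, over all $k$-edge-labelings of $K^{(2)}_n$, of the number of good triples. *)

theory Defs
  imports Complex_Main
begin

text \<open>A k-edge-labeling assigns to each
pair u<v a label phi u v from the linearly ordered set {0..<k}; values of phi outside
pairs u<v in [n] are irrelevant.\<close>

definition edge_labeling :: "nat \<Rightarrow> nat \<Rightarrow> (nat \<Rightarrow> nat \<Rightarrow> nat) \<Rightarrow> bool" where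
  "edge_labeling n k phi \<longleftrightarrow> (\<forall>u v. 1 \<le> u \<and> u < v \<and> v \<le> n \<longrightarrow> phi u v < k)"

definition good_triples :: "nat \<Rightarrow> (nat \<Rightarrow> nat \<Rightarrow> nat) \<Rightarrow> (nat \<times> nat \<times> nat) set" where
  "good_triples n phi = {(u, v, w). 1 \<le> u \<and> u < v \<and> v < w \<and> w \<le> n \<and> phi u v < phi v w}"

definition f :: "nat \<Rightarrow> nat \<Rightarrow> nat" where
  "f n k = Max {card (good_triples n phi) | phi. edge_labeling n k phi}"

end

theory Submission imports Defs "HOL-Real_Asymp.Real_Asymp" begin

lemma choose2_real: "real (n choose 2) = real n * (real n - 1) / 2"
proof (induction n)
  case 0 then show ?case by simp
next
  case (Suc n)
  have "(Suc n choose 2) = (n choose 1) + (n choose 2)"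
    by (metis Suc_1 binomial_Suc_Suc)
  then show ?case using Suc by (simp add: field_simps)
qed

lemma choose3_real: "real (n choose 3) = real n * (real n - 1) * (real n - 2) / 6"
proof (induction n)
  case 0 then show ?case by simp
next
  case (Suc n)
  have "(Suc n choose 3) = (n choose 2) + (n choose 3)"
    using binomial_Suc_Suc[of n 2] by (simp add: numeral_3_eq_3)
  then show ?case using Suc choose2_real[of n] by (simp add: field_simps)
qed

definition TT :: "nat \<Rightarrow> nat \<Rightarrow> (nat \<times> nat \<times> nat) set" where
  "TT a s = {(u, v, w). a < u \<and> u < v \<and> v < w \<and> w \<le> a + s}"

definition PP :: "nat \<Rightarrow> (nat \<times> nat) set" where
  "PP n = {(u, v). 0 < u \<and> u < v \<and> v \<le> n}"

lemma fin_TT: "finite (TT a s)"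
  by (rule finite_subset[of _ "{..a+s} \<times> {..a+s} \<times> {..a+s}"]) (auto simp: TT_def)

lemma fin_PP: "finite (PP n)"
  by (rule finite_subset[of _ "{..n} \<times> {..n}"]) (auto simp: PP_def)

lemma card_PP: "card (PP n) = n choose 2"
proof (induction n)
  case 0
  have "PP 0 = {}" by (auto simp: PP_def)
  then show ?case by simp
next
  case (Suc n)
  have e: "PP (Suc n) = PP n \<union> (\<lambda>u. (u, Suc n)) ` {1..n}"
    by (auto simp: PP_def)
  have d: "PP n \<inter> (\<lambda>u. (u, Suc n)) ` {1..n} = {}" by (auto simp: PP_def)
  have c: "card ((\<lambda>u. (u, Suc n)) ` {1..n}) = n"
    by (subst card_image) (auto simp: inj_on_def)
  have "card (PP (Suc n)) = card (PP n) + n"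
    unfolding e by (subst card_Un_disjoint) (use fin_PP d c in auto)
  moreover have "(Suc n choose 2) = (n choose 1) + (n choose 2)"
    by (metis Suc_1 binomial_Suc_Suc)
  ultimately show ?case using Suc by simp
qed

lemma card_TT0: "card (TT 0 n) = n choose 3"
proof (induction n)
  case 0
  have "TT 0 0 = {}" by (auto simp: TT_def)
  then show ?case by simp
next
  case (Suc n)
  have e: "TT 0 (Suc n) = TT 0 n \<union> (\<lambda>(u,v). (u, v, Suc n)) ` PP n"
    by (auto simp: TT_def PP_def image_iff le_Suc_eq)
  have d: "TT 0 n \<inter> (\<lambda>(u,v). (u, v, Suc n)) ` PP n = {}" by (auto simp: TT_def PP_def image_iff le_Suc_eq)
  have c: "card ((\<lambda>(u,v). (u, v, Suc n)) ` PP n) = n choose 2"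
    by (subst card_image) (auto simp: inj_on_def card_PP)
  have "card (TT 0 (Suc n)) = card (TT 0 n) + (n choose 2)"
    unfolding e by (subst card_Un_disjoint) (use fin_TT fin_PP d c in auto)
  moreover have "(Suc n choose 3) = (n choose 2) + (n choose 3)"
    using binomial_Suc_Suc[of n 2] by (simp add: numeral_3_eq_3)
  ultimately show ?case using Suc by simp
qed

lemma card_TT: "card (TT a s) = s choose 3"
proof -
  have "TT a s = (\<lambda>(u,v,w). (u+a, v+a, w+a)) ` TT 0 s"
  proof
    show "TT a s \<subseteq> (\<lambda>(u,v,w). (u+a, v+a, w+a)) ` TT 0 s"
    proof
      fix x assume "x \<in> TT a s"
      then obtain u v w where x: "x = (u,v,w)" "a < u" "u < v" "v < w" "w \<le> a + s"
        by (auto simp: TT_def)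
      then have "(u-a, v-a, w-a) \<in> TT 0 s" by (auto simp: TT_def)
      moreover have "x = (\<lambda>(u,v,w). (u+a, v+a, w+a)) (u-a, v-a, w-a)" using x by auto
      ultimately show "x \<in> (\<lambda>(u,v,w). (u+a, v+a, w+a)) ` TT 0 s" by blast
    qed
  qed (auto simp: TT_def)
  moreover have "inj_on (\<lambda>(u,v,w). (u+a, v+a, w+a)) (TT 0 s)"
    by (auto simp: inj_on_def)
  ultimately show ?thesis by (simp add: card_image card_TT0)
qed

lemma good_sub: "good_triples n phi \<subseteq> TT 0 n"
  by (auto simp: good_triples_def TT_def)

lemma f_ge: assumes "edge_labeling n k phi" shows "card (good_triples n phi) \<le> f n k"
proof -
  let ?S = "{card (good_triples n phi) | phi. edge_labeling n k phi}"
  have "?S \<subseteq> {..card (TT 0 n)}"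
    using good_sub card_mono[OF fin_TT] by fastforce
  then have "finite ?S" using finite_subset by blast
  then show ?thesis unfolding f_def using assms by (intro Max_ge) auto
qed

lemma comb_bound:
  assumes "M > 0"
  shows "(n choose 3) \<le> f n (2*M - 1) + M * ((n div M + 1) choose 3)"
proof -
  define s where "s = n div M + 1"
  define b where "b u = (u - 1) div s" for u
  define phi where "phi u v = b u + b v" for u v
  have sp: "s > 0" by (simp add: s_def)
  have Ms: "n < M * s"
  proof -
    have "n = M * (n div M) + n mod M" by simp
    moreover have "n mod M < M" using assms by simp
    ultimately show ?thesis unfolding s_def distrib_left mult_1_right by linarith
  qed
  have bM: "b u < M" if "u \<le> n" for u
    unfolding b_def using Ms that sp by (intro less_mult_imp_div_less) (simp add: mult.commute)
  have lab: "edge_labeling n (2*M - 1) phi"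
    unfolding edge_labeling_def phi_def
  proof (intro allI impI)
    fix u v assume "1 \<le> u \<and> u < v \<and> v \<le> n"
    then have "b u < M" "b v < M" using bM by auto
    then show "b u + b v < 2 * M - 1" by linarith
  qed
  have bmono: "b u \<le> b v" if "u \<le> v" for u v
    unfolding b_def using that by (intro div_le_mono) simp
  have sub: "TT 0 n - good_triples n phi \<subseteq> (\<Union>i<M. TT (i*s) s)"
  proof
    fix x assume x: "x \<in> TT 0 n - good_triples n phi"
    then obtain u v w where xe: "x = (u,v,w)" "0 < u" "u < v" "v < w" "w \<le> n"
      by (auto simp: TT_def)
    with x have "\<not> phi u v < phi v w" by (auto simp: good_triples_def)
    then have "b w \<le> b u" by (simp add: phi_def)
    moreover have "b u \<le> b w" using xe by (intro bmono) simp
    ultimately have eq: "b u = b w" by simp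
    define i where "i = b u"
    have iM: "i < M" using bM xe unfolding i_def by simp
    have "i * s \<le> u - 1" unfolding i_def b_def by (rule div_times_less_eq_dividend)

    then have l: "i * s < u" using xe by simp
    have "w - 1 < s + ((w - 1) div s) * s" by (rule dividend_less_div_times[OF sp])
    then have "w - 1 < (i + 1) * s" using eq unfolding i_def b_def by simp
    then have r: "w \<le> i * s + s" by simp
    have "x \<in> TT (i*s) s" using xe l r by (simp add: TT_def)
    then show "x \<in> (\<Union>i<M. TT (i*s) s)" using iM by blast
  qed
  have "card (TT 0 n - good_triples n phi) \<le> (\<Sum>i<M. card (TT (i*s) s))"
    by (rule order.trans[OF card_mono[OF _ sub] card_UN_le]) (auto intro: fin_TT)
  also have "\<dots> = M * (s choose 3)" by (simp add: card_TT)
  finally have c1: "card (TT 0 n - good_triples n phi) \<le> M * (s choose 3)" .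
  have "card (TT 0 n - good_triples n phi) = card (TT 0 n) - card (good_triples n phi)"
    by (rule card_Diff_subset) (use finite_subset[OF good_sub fin_TT] good_sub in auto)
  then have "(n choose 3) \<le> card (good_triples n phi) + M * (s choose 3)"
    using c1 card_TT0[of n] by linarith
  also have "\<dots> \<le> f n (2*M - 1) + M * (s choose 3)" using f_ge[OF lab] by simp
  finally show ?thesis unfolding s_def .
qed

lemma choose3_le: "real (s choose 3) \<le> real s ^ 3 / 6"
proof (cases "s < 3")
  case True
  then have "s choose 3 = 0" by (simp add: binomial_eq_0)
  then show ?thesis by (simp only: of_nat_0) simp
next
  case False
  then have "real s - 1 \<le> real s" "real s - 2 \<le> real s" "real s - 1 \<ge> 0" "real s - 2 \<ge> 0" by auto
  then have "real s * (real s - 1) * (real s - 2) \<le> real s * real s * real s"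
    by (intro mult_mono) auto
  then show ?thesis unfolding choose3_real by (simp add: power3_eq_cube)
qed

theorem proposition4p2:
  fixes k :: nat
  assumes "odd k"
  shows "\<exists>g :: nat \<Rightarrow> real. g \<longlonglongrightarrow> 0 \<and>
           (\<forall>n. real (f n k) \<ge> (1 - 4 / (real k + 1)^2 + g n) * real (n choose 3))"
proof -
  define M where "M = (k + 1) div 2"
  have kM: "k = 2*M - 1" "M > 0" using assms unfolding M_def by (auto elim!: oddE)
  have Mr: "real k + 1 = 2 * real M" using kM by (simp add: of_nat_diff)
  define g where "g n = (1 - (real n + real M)^3/(real n*(real n-1)*(real n-2))) / (real M)^2" for n
  have lim: "g \<longlonglongrightarrow> 0"
  proof -
    have "\<And>Mr::real. Mr > 0 \<Longrightarrow> (\<lambda>n::nat. (1 - (real n + Mr)^3/(real n*(real n-1)*(real n-2))) / Mr^2) \<longlonglongrightarrow> 0"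
      by real_asymp
    from this[of "real M"] kM show ?thesis unfolding g_def by simp
  qed
  have main: "real (f n k) \<ge> (1 - 4 / (real k + 1)^2 + g n) * real (n choose 3)" for n
  proof (cases "n < 3")
    case True
    then have "n choose 3 = 0" by (simp add: binomial_eq_0)
    then show ?thesis by (simp only: of_nat_0 mult_zero_right)
  next
    case False
    define s where "s = n div M + 1"
    have c: "real (n choose 3) \<le> real (f n k) + real M * real (s choose 3)"
      using comb_bound[OF kM(2), of n] kM(1) unfolding s_def
      by (metis of_nat_add of_nat_le_iff of_nat_mult)
    have sle: "real s \<le> (real n + real M) / real M"
    proof -
      have "real (n div M) \<le> real n / real M" by (rule of_nat_div_le_of_nat)
      then show ?thesis unfolding s_def using kM(2) by (simp add: field_simps)
    qed
    have "real M * real (s choose 3) \<le> real M * (real s ^ 3 / 6)"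
      using choose3_le by (intro mult_left_mono) auto
    also have "\<dots> \<le> real M * (((real n + real M) / real M) ^ 3 / 6)"
      using sle by (intro mult_left_mono divide_right_mono power_mono) auto
    also have "\<dots> = (real n + real M)^3 / (6 * (real M)^2)"
      using kM(2) by (simp add: field_simps power3_eq_cube power2_eq_square)
    finally have b: "real M * real (s choose 3) \<le> (real n + real M)^3 / (6 * (real M)^2)" .
    have nz: "real n * (real n - 1) * (real n - 2) \<noteq> 0" using False by auto
    have "(1 - 4 / (real k + 1)^2 + g n) * real (n choose 3)
          = real (n choose 3) - (real n + real M)^3 / (6 * (real M)^2)"
    proof -
      define D where "D = real n * (real n - 1) * (real n - 2)"
      define X where "X = (real n + real M)^3"
      define Q where "Q = (real M)^2"
      have Qp: "Q > 0" using kM(2) by (simp add: Q_def)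
      have e1: "4/(real k+1)^2 = 1/Q" unfolding Mr Q_def by (simp add: power2_eq_square)
      have e3: "real (n choose 3) = D / 6" unfolding D_def by (rule choose3_real)
      have e2: "g n = (1 - X / D) / Q" unfolding g_def X_def D_def Q_def ..
      have "(1 - 1/Q + (1 - X / D) / Q) * (D/6) = D/6 - X / (6*Q)"
        using Qp nz[folded D_def] by (simp add: field_simps)
      then show ?thesis unfolding e1 e2 e3 X_def Q_def .
    qed
    then show ?thesis using b c by linarith
  qed
  show ?thesis using lim main by blast
qed

end
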